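(* Let $(X,d,\preccurlyeq)$ be a preordered $s$-regular $b$-metric space and let $T,S,\tilde T,\tilde S:X\to X$. Suppose there are mappings $H_t,K_t:X\to X$, $0\le t\le n$, such that $$T=H_0\preccurlyeq H_1\succcurlyeq H_2\preccurlyeq\cdots\succcurlyeq H_n=\tilde T,\qquad S=K_0\succcurlyeq K_1\preccurlyeq K_2\succcurlyeq\cdots\preccurlyeq K_n=\tilde S.$$ Suppose $x_0\in\mathrm{Coin}(T,S)$ and: (i) for each odd $t$, $1\le t\le n$: $K_t$ is isotone, $H_t$ covers $K_t$, and every chain $C\in\mathcal{C}(x_0,K_t,H_t,\preccurlyeq)$ has a lower bound $w\in X$ satisfying $w\preccurlyeq K_t(w)$ for which there exists $z\in X$ with $H_t^i(z)\preccurlyeq H_t(w)\preccurlyeq K_t(w)$ for all $i\in\mathbb{N}$ and $d(K_t^i(w),H_t^i(z))\to 0$ as $i\to\infty$; (ii) for each even $t$, $1\le t\le n$: $H_t$ is isotone, $K_t$ covers $H_t$, and every chain $C'\in\mathcal{C}(x_0,H_t,K_t,\preccurlyeq)$ has a lower bound $w'\in X$ satisfying $w'\preccurlyeq H_t(w')$ for which there exists $z'\in X$ with $K_t^i(z')\preccurlyeq K_t(w')\preccurlyeq H_t(w')$ for all $i\in\mathbb{N}$ and $d(H_t^i(w'),K_t^i(z'))\to 0$ as $i\to\infty$. Then there exists a chain $x_0\succcurlyeq x_1\succcurlyeq x_2\succcurlyeq\cdots\succcurlyeq x_n$ such that for every $t$, $1\le t\le n$, $x_t\in\mathrm{Coin}(H_t,K_t)\cap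 O_X(x_{t-1})$ and $x_t$ is a minimal element of $\mathrm{Coin}(H_t,K_t)\cap O_X(x_{t-1})$.
   Context: A $b$-metric space with coefficient $s\ge 1$ is a nonempty set $X$ with $d:X\times X\to[0,\infty)$ such that for all $x,y,z$: $d(x,y)=0$ iff $x=y$; $d(x,y)=d(y,x)$; $d(x,y)\le s[d(x,z)+d(z,y)]$. A preorder is a reflexive transitive relation $\preccurlyeq$; $x\succcurlyeq y$ means $y\preccurlyeq x$; $x\prec y$ means $x\preccurlyeq y$ and $x\neq y$. A preordered $s$-regular $b$-metric space $(X,d,\preccurlyeq)$ is a $b$-metric space with coefficient $s$ with a preorder such that $x\preccurlyeq y\preccurlyeq z$ implies $\max\{d(x,y),d(y,z)\}\le s^2d(x,z)$. For maps $F,G:X\to X$, $F\preccurlyeq G$ means $F(x)\preccurlyeq G(x)$ for all $x\in X$. A chain is a subset any two elements of which are comparable. A map $T$ is isotone if $x\preccurlyeq y$ implies $T(x)\preccurlyeq T(y)$; $T^i$ is the $i$-th iterate. $O_X(x_0)=\{x: x\preccurlyeq x_0\}$; $\mathrm{Coin}(T,S)=\{x: T(x)=S(x)\}$. A map $S$ covers a map $T$ if for every $x\in X$ with $T(x)\preccurlyeq S(x)$ there exists $y\preccurlyeq x$ with $S(y)=T(x)$. For maps $T,S$ (here the first argument is the map playing the role of $T$), $\mathcal{C}(T,S,\preccurlyeq)$ is the set of chains $C$ such that for all $x,y\in C$: $T(x)\preccurlyeq S(x)$; $x\prec y$ implies $S(x)\preccurlyeq T(y)$; and $S(C)\subset T(X)$;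 and $\mathcal{C}(x_0,T,S,\preccurlyeq)=\{C\in\mathcal{C}(T,S,\preccurlyeq): C\subset O_X(x_0),\ S(C)\subset T(O_X(x_0))\}$. A lower bound of $C$ is $w$ with $w\preccurlyeq x$ for all $x\in C$. A minimal element of $A$ is $w\in A$ with no $u\in A$ such that $u\prec w$. *)

theory Defs
  imports "HOL-Analysis.Analysis"
begin

text \<open>The space X is the whole (nonempty) type 'a; the preorder is a relation le.\<close>

definition b_metric :: "('a \<Rightarrow> 'a \<Rightarrow> real) \<Rightarrow> real \<Rightarrow> bool" where
  "b_metric d s \<longleftrightarrow> s \<ge> 1 \<and> (\<forall>x y. d x y \<ge> 0) \<and> (\<forall>x y. d x y = 0 \<longleftrightarrow> x = y)
     \<and> (\<forall>x y. d x y = d y x) \<and> (\<forall>x y z. d x y \<le> s * (d x z + d z y))"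

definition preorder_rel :: "('a \<Rightarrow> 'a \<Rightarrow> bool) \<Rightarrow> bool" where
  "preorder_rel le \<longleftrightarrow> (\<forall>x. le x x) \<and> (\<forall>x y z. le x y \<longrightarrow> le y z \<longrightarrow> le x z)"

definition preordered_s_regular_bmetric ::
  "('a \<Rightarrow> 'a \<Rightarrow> real) \<Rightarrow> real \<Rightarrow> ('a \<Rightarrow> 'a \<Rightarrow> bool) \<Rightarrow> bool" where
  "preordered_s_regular_bmetric d s le \<longleftrightarrow> b_metric d s \<and> preorder_rel le \<and>
     (\<forall>x y z. le x y \<longrightarrow> le y z \<longrightarrow> max (d x y) (d y z) \<le> s\<^sup>2 * d x z)"

definition strict_rel :: "('a \<Rightarrow> 'a \<Rightarrow> bool) \<Rightarrow> 'a \<Rightarrow> 'a \<Rightarrow> bool" where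
  "strict_rel le x y \<longleftrightarrow> le x y \<and> x \<noteq> y"

definition map_le :: "('a \<Rightarrow> 'a \<Rightarrow> bool) \<Rightarrow> ('a \<Rightarrow> 'a) \<Rightarrow> ('a \<Rightarrow> 'a) \<Rightarrow> bool" where
  "map_le le F G \<longleftrightarrow> (\<forall>x. le (F x) (G x))"

definition is_chain :: "('a \<Rightarrow> 'a \<Rightarrow> bool) \<Rightarrow> 'a set \<Rightarrow> bool" where
  "is_chain le C \<longleftrightarrow> (\<forall>x\<in>C. \<forall>y\<in>C. le x y \<or> le y x)"

definition isotone :: "('a \<Rightarrow> 'a \<Rightarrow> bool) \<Rightarrow> ('a \<Rightarrow> 'a) \<Rightarrow> bool" where
  "isotone le T \<longleftrightarrow> (\<forall>x y. le x y \<longrightarrow> le (T x) (T y))"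

definition lower_cone :: "('a \<Rightarrow> 'a \<Rightarrow> bool) \<Rightarrow> 'a \<Rightarrow> 'a set" where
  "lower_cone le x0 = {x. le x x0}"

definition Coin :: "('a \<Rightarrow> 'a) \<Rightarrow> ('a \<Rightarrow> 'a) \<Rightarrow> 'a set" where
  "Coin T S = {x. T x = S x}"

definition covers :: "('a \<Rightarrow> 'a \<Rightarrow> bool) \<Rightarrow> ('a \<Rightarrow> 'a) \<Rightarrow> ('a \<Rightarrow> 'a) \<Rightarrow> bool" where
  "covers le S T \<longleftrightarrow> (\<forall>x. le (T x) (S x) \<longrightarrow> (\<exists>y. le y x \<and> S y = T x))"

definition chains_C :: "('a \<Rightarrow> 'a \<Rightarrow> bool) \<Rightarrow> ('a \<Rightarrow> 'a) \<Rightarrow> ('a \<Rightarrow> 'a) \<Rightarrow> 'a set set" where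
  "chains_C le T S = {C. is_chain le C \<and> (\<forall>x\<in>C. le (T x) (S x))
      \<and> (\<forall>x\<in>C. \<forall>y\<in>C. strict_rel le x y \<longrightarrow> le (S x) (T y)) \<and> S ` C \<subseteq> range T}"

definition chains_C0 :: "('a \<Rightarrow> 'a \<Rightarrow> bool) \<Rightarrow> 'a \<Rightarrow> ('a \<Rightarrow> 'a) \<Rightarrow> ('a \<Rightarrow> 'a) \<Rightarrow> 'a set set" where
  "chains_C0 le x0 T S = {C \<in> chains_C le T S. C \<subseteq> lower_cone le x0 \<and> S ` C \<subseteq> T ` lower_cone le x0}"

definition lower_bound :: "('a \<Rightarrow> 'a \<Rightarrow> bool) \<Rightarrow> 'a set \<Rightarrow> 'a \<Rightarrow> bool" where
  "lower_bound le C w \<longleftrightarrow> (\<forall>x\<in>C. le w x)"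

definition minimal_elem :: "('a \<Rightarrow> 'a \<Rightarrow> bool) \<Rightarrow> 'a set \<Rightarrow> 'a \<Rightarrow> bool" where
  "minimal_elem le A w \<longleftrightarrow> w \<in> A \<and> \<not> (\<exists>u\<in>A. strict_rel le u w)"

end

theory Submission
  imports Defs
begin

lemma coin_sym: "Coin P Q = Coin Q P"
  unfolding Coin_def by auto

lemma sp_facts:
  assumes sp: "preordered_s_regular_bmetric d s le"
  shows "\<And>x. le x x" "\<And>x y z. le x y \<Longrightarrow> le y z \<Longrightarrow> le x z"
    "\<And>x y. le x y \<Longrightarrow> le y x \<Longrightarrow> x = y"
    "\<And>x y z. le x y \<Longrightarrow> le y z \<Longrightarrow> d y z \<le> s\<^sup>2 * d x z"
    "\<And>x y z. le x y \<Longrightarrow> le y z \<Longrightarrow> d x y \<le> s\<^sup>2 * d x z"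
    "\<And>x y. d x y = d y x" "\<And>x y. d x y \<ge> 0" "\<And>x y. d x y = 0 \<longleftrightarrow> x = y" "s \<ge> 1"
proof -
  show r: "\<And>x. le x x" "\<And>x y z. le x y \<Longrightarrow> le y z \<Longrightarrow> le x z"
    using sp unfolding preordered_s_regular_bmetric_def preorder_rel_def by blast+
  show "\<And>x y z. le x y \<Longrightarrow> le y z \<Longrightarrow> d y z \<le> s\<^sup>2 * d x z"
    "\<And>x y z. le x y \<Longrightarrow> le y z \<Longrightarrow> d x y \<le> s\<^sup>2 * d x z"
    using sp unfolding preordered_s_regular_bmetric_def by (meson max.boundedE)+
  show bm: "\<And>x y. d x y = d y x" "\<And>x y. d x y \<ge> 0" "\<And>x y. d x y = 0 \<longleftrightarrow> x = y" "s \<ge> 1"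
    using sp unfolding preordered_s_regular_bmetric_def b_metric_def by auto
  fix x y assume a: "le x y" "le y x"
  have "max (d x y) (d y x) \<le> s\<^sup>2 * d x x"
    using sp a unfolding preordered_s_regular_bmetric_def by blast
  moreover have "d x x = 0" using bm by simp
  ultimately have "d x y \<le> 0" by simp
  then show "x = y" using bm by (meson antisym)
qed

lemma iter_mono:
  assumes sp: "preordered_s_regular_bmetric d s le" and iso: "isotone le P" and w: "le w (P w)"
  shows "i \<ge> 1 \<Longrightarrow> le (P w) ((P ^^ i) w)"
proof (induction i)
  case 0 then show ?case by simp
next
  case (Suc i)
  have step: "le ((P ^^ j) w) ((P ^^ Suc j) w)" for j
  proof (induction j)
    case 0 then show ?case using w by simp
  next
    case (Suc j) then show ?case using iso unfolding isotone_def by simp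
  qed
  show ?case
  proof (cases "i = 0")
    case True then show ?thesis using sp_facts(1)[OF sp] by simp
  next
    case False
    then show ?thesis using Suc step sp_facts(2)[OF sp] by (meson less_one not_less)
  qed
qed

lemma coin_w:
  assumes sp: "preordered_s_regular_bmetric d s le" and iso: "isotone le P" and w: "le w (P w)"
    and z: "\<forall>i\<ge>1. le ((Q ^^ i) z) (Q w) \<and> le (Q w) (P w)"
    and lim: "(\<lambda>i. d ((P ^^ i) w) ((Q ^^ i) z)) \<longlonglongrightarrow> 0"
  shows "Q w = P w"
proof -
  have b: "d (Q w) (P w) \<le> s^4 * d ((P ^^ i) w) ((Q ^^ i) z)" if "i \<ge> 1" for i
  proof -
    have qp: "le (Q w) (P w)" using z by auto
    have pi: "le (P w) ((P ^^ i) w)" using iter_mono[OF sp iso w that] .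
    have qpi: "le (Q w) ((P ^^ i) w)" using sp_facts(2)[OF sp qp pi] .
    have 1: "d (Q w) ((P ^^ i) w) \<le> s\<^sup>2 * d ((Q ^^ i) z) ((P ^^ i) w)"
      using sp_facts(4)[OF sp _ qpi] z that by blast
    have 2: "d (Q w) (P w) \<le> s\<^sup>2 * d (Q w) ((P ^^ i) w)"
      using sp_facts(5)[OF sp qp pi] .
    have s2: "s\<^sup>2 \<ge> 0" by simp
    have "d (Q w) (P w) \<le> s\<^sup>2 * (s\<^sup>2 * d ((Q ^^ i) z) ((P ^^ i) w))"
      using 2 mult_left_mono[OF 1 s2] by linarith
    also have "\<dots> = s^4 * d ((P ^^ i) w) ((Q ^^ i) z)"
      using sp_facts(6)[OF sp] by (simp add: power2_eq_square power4_eq_xxxx)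
    finally show ?thesis .
  qed
  have "(\<lambda>i. s^4 * d ((P ^^ i) w) ((Q ^^ i) z)) \<longlonglongrightarrow> s^4 * 0"
    by (intro tendsto_mult tendsto_const lim)
  moreover have "\<exists>N. \<forall>i\<ge>N. d (Q w) (P w) \<le> s^4 * d ((P ^^ i) w) ((Q ^^ i) z)"
    using b by blast
  ultimately have "d (Q w) (P w) \<le> s^4 * 0"
    by (rule LIMSEQ_le_const)
  moreover have "d (Q w) (P w) \<ge> 0" using sp_facts(7)[OF sp] .
  ultimately have "d (Q w) (P w) = 0" by simp
  then show ?thesis using sp_facts(8)[OF sp, of "Q w" "P w"] by simp
qed

lemma step:
  assumes sp: "preordered_s_regular_bmetric d s le" and iso: "isotone le P"
    and cov: "covers le Q P"
    and ch: "\<forall>C \<in> chains_C0 le x0 P Q. \<exists>w. lower_bound le C w \<and> le w (P w) \<and>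
           (\<exists>z. (\<forall>i\<ge>1. le ((Q ^^ i) z) (Q w) \<and> le (Q w) (P w)) \<and>
                (\<lambda>i. d ((P ^^ i) w) ((Q ^^ i) z)) \<longlonglongrightarrow> 0)"
    and x: "le x x0" and pq: "le (P x) (Q x)"
  shows "\<exists>m. minimal_elem le (Coin P Q \<inter> lower_cone le x) m"
proof -
  note R = sp_facts(1)[OF sp] and Tr = sp_facts(2)[OF sp] and AS = sp_facts(3)[OF sp]
  have lbC: "\<exists>w. lower_bound le C w \<and> Q w = P w" if "C \<in> chains_C0 le x0 P Q" for C
  proof -
    from ch that obtain w where hw: "lower_bound le C w \<and> le w (P w) \<and>
           (\<exists>z. (\<forall>i\<ge>1. le ((Q ^^ i) z) (Q w) \<and> le (Q w) (P w)) \<and>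
                (\<lambda>i. d ((P ^^ i) w) ((Q ^^ i) z)) \<longlonglongrightarrow> 0)"
      by (elim ballE exE) auto
    then obtain z where hz: "\<forall>i\<ge>1. le ((Q ^^ i) z) (Q w) \<and> le (Q w) (P w)"
      "(\<lambda>i. d ((P ^^ i) w) ((Q ^^ i) z)) \<longlonglongrightarrow> 0"
      by (elim conjE exE)
    have "Q w = P w" using hw hz coin_w[OF sp iso] by (elim conjE) (rule coin_w[OF sp iso])
    then show ?thesis using hw by (intro exI[of _ w]) simp
  qed
  define A where "A = Coin P Q \<inter> lower_cone le x"
  obtain y where y: "le y x" "Q y = P x" using cov pq unfolding covers_def by blast
  have yx0: "le y x0" using Tr[OF y(1) x] .
  have "{y} \<in> chains_C0 le x0 P Q"
  proof -
    have py: "le (P y) (Q y)" using iso y unfolding isotone_def by simp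
    have c1: "is_chain le {y}" unfolding is_chain_def using R by simp
    have c2: "\<forall>a\<in>{y}. \<forall>b\<in>{y}. strict_rel le a b \<longrightarrow> le (Q a) (P b)"
      unfolding strict_rel_def by simp
    have c3: "Q ` {y} \<subseteq> range P" using y(2) by simp
    have c4: "{y} \<subseteq> lower_cone le x0" using yx0 unfolding lower_cone_def by simp
    have c5: "Q ` {y} \<subseteq> P ` lower_cone le x0" using y(2) x unfolding lower_cone_def by simp
    show ?thesis unfolding chains_C0_def chains_C_def using c1 c2 c3 c4 c5 py by simp
  qed
  then obtain w0 where w0: "lower_bound le {y} w0" "Q w0 = P w0" using lbC by blast
  have "le w0 y" using w0(1) unfolding lower_bound_def by simp
  then have "le w0 x" using Tr y(1) by metis
  then have w0A: "w0 \<in> A" using w0(2) unfolding A_def Coin_def lower_cone_def by simp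
  have po: "partial_order_on A (relation_of (\<lambda>a b. le b a) A)"
  proof -
    have "refl_on A (relation_of (\<lambda>a b. le b a) A)"
      unfolding refl_on_def relation_of_def using R by auto
    moreover have "trans (relation_of (\<lambda>a b. le b a) A)"
      unfolding trans_def relation_of_def using Tr by blast
    moreover have "antisym (relation_of (\<lambda>a b. le b a) A)"
      unfolding antisym_def relation_of_def using AS by blast
    moreover have "relation_of (\<lambda>a b. le b a) A \<subseteq> A \<times> A" unfolding relation_of_def by auto
    ultimately show ?thesis unfolding partial_order_on_def preorder_on_def by simp
  qed
  have "\<exists>u \<in> A. \<forall>a \<in> C. le u a" if C: "C \<in> Chains (relation_of (\<lambda>a b. le b a) A)" for C
  proof (cases "C = {}")
    case True then show ?thesis using w0A by blast
  next
    case False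
    have CA: "C \<subseteq> A" using C unfolding Chains_def relation_of_def by auto
    have chC: "is_chain le C" using C unfolding Chains_def relation_of_def is_chain_def by auto
    have eq: "P c = Q c \<and> le c x0" if "c \<in> C" for c
    proof -
      have "c \<in> A" using CA that by blast
      then have "P c = Q c" "le c x" unfolding A_def Coin_def lower_cone_def by auto
      then show ?thesis using Tr x by metis
    qed
    have "C \<in> chains_C0 le x0 P Q"
    proof -
      have c2: "\<forall>a\<in>C. \<forall>b\<in>C. strict_rel le a b \<longrightarrow> le (Q a) (P b)"
      proof (intro ballI impI)
        fix a b assume "a \<in> C" "b \<in> C" "strict_rel le a b"
        then show "le (Q a) (P b)" using eq[of a] iso unfolding strict_rel_def isotone_def by metis
      qed
      have c1: "\<forall>a\<in>C. le (P a) (Q a)" using eq R by metis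
      have c5: "Q ` C \<subseteq> P ` lower_cone le x0"
      proof
        fix q assume "q \<in> Q ` C"
        then obtain c where "c \<in> C" "q = Q c" by blast
        then show "q \<in> P ` lower_cone le x0" using eq[of c] unfolding lower_cone_def by force
      qed
      have c3: "Q ` C \<subseteq> range P" using c5 by blast
      have c4: "C \<subseteq> lower_cone le x0" using eq unfolding lower_cone_def by blast
      show ?thesis unfolding chains_C0_def chains_C_def using chC c1 c2 c3 c4 c5 by simp
    qed
    then obtain w where w: "lower_bound le C w" "Q w = P w" using lbC by blast
    obtain c where c: "c \<in> C" using False by blast
    have "le w c" using w(1) c unfolding lower_bound_def by blast
    moreover have "le c x" using CA c unfolding A_def lower_cone_def by blast
    ultimately have "le w x" using Tr by metis
    then have "w \<in> A" using w(2) unfolding A_def Coin_def lower_cone_def by simp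
    then show ?thesis using w(1) unfolding lower_bound_def by blast
  qed
  then obtain m where m: "m \<in> A" "\<forall>a\<in>A. le a m \<longrightarrow> a = m"
    using predicate_Zorn[OF po] by blast
  then show ?thesis unfolding minimal_elem_def A_def strict_rel_def by blast
qed

theorem theorem2p3:
  fixes d :: "'a \<Rightarrow> 'a \<Rightarrow> real" and s :: real and le :: "'a \<Rightarrow> 'a \<Rightarrow> bool"
    and T S T' S' :: "'a \<Rightarrow> 'a" and H K :: "nat \<Rightarrow> 'a \<Rightarrow> 'a" and n :: nat and x0 :: 'a
  assumes sp: "preordered_s_regular_bmetric d s le"
    and H0: "H 0 = T" and Hn: "H n = T'" and K0: "K 0 = S" and Kn: "K n = S'"
    and Hzig: "\<forall>t<n. (if even t then map_le le (H t) (H (Suc t)) else map_le le (H (Suc t)) (H t))"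
    and Kzig: "\<forall>t<n. (if even t then map_le le (K (Suc t)) (K t) else map_le le (K t) (K (Suc t)))"
    and x0: "x0 \<in> Coin T S"
    and odd_case: "\<forall>t. 1 \<le> t \<and> t \<le> n \<and> odd t \<longrightarrow>
        isotone le (K t) \<and> covers le (H t) (K t) \<and>
        (\<forall>C \<in> chains_C0 le x0 (K t) (H t). \<exists>w. lower_bound le C w \<and> le w (K t w) \<and>
           (\<exists>z. (\<forall>i\<ge>1. le ((H t ^^ i) z) (H t w) \<and> le (H t w) (K t w)) \<and>
                (\<lambda>i. d ((K t ^^ i) w) ((H t ^^ i) z)) \<longlonglongrightarrow> 0))"
    and even_case: "\<forall>t. 1 \<le> t \<and> t \<le> n \<and> even t \<longrightarrow>
        isotone le (H t) \<and> covers le (K t) (H t) \<and>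
        (\<forall>C \<in> chains_C0 le x0 (H t) (K t). \<exists>w. lower_bound le C w \<and> le w (H t w) \<and>
           (\<exists>z. (\<forall>i\<ge>1. le ((K t ^^ i) z) (K t w) \<and> le (K t w) (H t w)) \<and>
                (\<lambda>i. d ((H t ^^ i) w) ((K t ^^ i) z)) \<longlonglongrightarrow> 0))"
  shows "\<exists>x :: nat \<Rightarrow> 'a. x 0 = x0 \<and>
     (\<forall>t. 1 \<le> t \<and> t \<le> n \<longrightarrow>
        le (x t) (x (t - 1)) \<and>
        x t \<in> Coin (H t) (K t) \<inter> lower_cone le (x (t - 1)) \<and>
        minimal_elem le (Coin (H t) (K t) \<inter> lower_cone le (x (t - 1))) (x t))"
proof -
  note R = sp_facts(1)[OF sp] and Tr = sp_facts(2)[OF sp]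
  define x where "x = rec_nat x0 (\<lambda>t xt. SOME y. minimal_elem le (Coin (H (Suc t)) (K (Suc t)) \<inter> lower_cone le xt) y)"
  have x0e: "x 0 = x0" unfolding x_def by simp
  have xS: "x (Suc t) = (SOME y. minimal_elem le (Coin (H (Suc t)) (K (Suc t)) \<inter> lower_cone le (x t)) y)" for t
    unfolding x_def by simp
  have main: "t \<le> n \<Longrightarrow> x t \<in> Coin (H t) (K t) \<and> le (x t) x0 \<and>
     (t \<ge> 1 \<longrightarrow> minimal_elem le (Coin (H t) (K t) \<inter> lower_cone le (x (t - 1))) (x t))" for t
  proof (induction t)
    case 0 then show ?case using x0e x0 H0 K0 R by simp
  next
    case (Suc t)
    then have IH: "x t \<in> Coin (H t) (K t)" "le (x t) x0" and tn: "t < n" by auto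
    have ex: "\<exists>m. minimal_elem le (Coin (H (Suc t)) (K (Suc t)) \<inter> lower_cone le (x t)) m"
    proof (cases "even t")
      case True
      have o: "isotone le (K (Suc t)) \<and> covers le (H (Suc t)) (K (Suc t)) \<and>
        (\<forall>C \<in> chains_C0 le x0 (K (Suc t)) (H (Suc t)). \<exists>w. lower_bound le C w \<and> le w (K (Suc t) w) \<and>
           (\<exists>z. (\<forall>i\<ge>1. le ((H (Suc t) ^^ i) z) (H (Suc t) w) \<and> le (H (Suc t) w) (K (Suc t) w)) \<and>
                (\<lambda>i. d ((K (Suc t) ^^ i) w) ((H (Suc t) ^^ i) z)) \<longlonglongrightarrow> 0))"
        using odd_case[rule_format, of "Suc t"] Suc.prems True by simp
      have h: "le (H t (x t)) (H (Suc t) (x t))" "le (K (Suc t) (x t)) (K t (x t))"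
      proof -
        have "map_le le (H t) (H (Suc t))" "map_le le (K (Suc t)) (K t)"
          using Hzig[rule_format, OF tn] Kzig[rule_format, OF tn] True by simp_all
        then show "le (H t (x t)) (H (Suc t) (x t))" "le (K (Suc t) (x t)) (K t (x t))"
          unfolding map_le_def by blast+
      qed
      have "le (K (Suc t) (x t)) (H (Suc t) (x t))"
      proof -
        have "H t (x t) = K t (x t)" using IH(1) unfolding Coin_def by simp
        then show ?thesis using h Tr by metis
      qed
      then have "\<exists>m. minimal_elem le (Coin (K (Suc t)) (H (Suc t)) \<inter> lower_cone le (x t)) m"
        using o by (intro step[OF sp _ _ _ IH(2)]) auto
      then show ?thesis by (simp add: coin_sym)
    next
      case False
      have o: "isotone le (H (Suc t)) \<and> covers le (K (Suc t)) (H (Suc t)) \<and>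
        (\<forall>C \<in> chains_C0 le x0 (H (Suc t)) (K (Suc t)). \<exists>w. lower_bound le C w \<and> le w (H (Suc t) w) \<and>
           (\<exists>z. (\<forall>i\<ge>1. le ((K (Suc t) ^^ i) z) (K (Suc t) w) \<and> le (K (Suc t) w) (H (Suc t) w)) \<and>
                (\<lambda>i. d ((H (Suc t) ^^ i) w) ((K (Suc t) ^^ i) z)) \<longlonglongrightarrow> 0))"
        using even_case[rule_format, of "Suc t"] Suc.prems False by simp
      have h: "le (H (Suc t) (x t)) (H t (x t))" "le (K t (x t)) (K (Suc t) (x t))"
      proof -
        have "map_le le (H (Suc t)) (H t)" "map_le le (K t) (K (Suc t))"
          using Hzig[rule_format, OF tn] Kzig[rule_format, OF tn] False by simp_all
        then show "le (H (Suc t) (x t)) (H t (x t))" "le (K t (x t)) (K (Suc t) (x t))"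
          unfolding map_le_def by blast+
      qed
      have "le (H (Suc t) (x t)) (K (Suc t) (x t))"
      proof -
        have "H t (x t) = K t (x t)" using IH(1) unfolding Coin_def by simp
        then show ?thesis using h Tr by metis
      qed
      then show ?thesis
        using o by (intro step[OF sp _ _ _ IH(2)]) auto
    qed
    have mS: "minimal_elem le (Coin (H (Suc t)) (K (Suc t)) \<inter> lower_cone le (x t)) (x (Suc t))"
      unfolding xS using someI_ex[OF ex] .
    then have "x (Suc t) \<in> Coin (H (Suc t)) (K (Suc t))" "le (x (Suc t)) (x t)"
      unfolding minimal_elem_def lower_cone_def by auto
    have "le (x (Suc t)) x0" using Tr[OF \<open>le (x (Suc t)) (x t)\<close> IH(2)] .
    then show ?case using mS \<open>x (Suc t) \<in> Coin (H (Suc t)) (K (Suc t))\<close> by simp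
  qed
  show ?thesis
  proof (intro exI conjI allI impI)
    show "x 0 = x0" by (rule x0e)
  next
    fix t assume t: "1 \<le> t \<and> t \<le> n"
    then have m: "minimal_elem le (Coin (H t) (K t) \<inter> lower_cone le (x (t - 1))) (x t)" using main by blast
    then show "x t \<in> Coin (H t) (K t) \<inter> lower_cone le (x (t - 1))" unfolding minimal_elem_def by blast
    then show "le (x t) (x (t - 1))" unfolding lower_cone_def by blast
    show "minimal_elem le (Coin (H t) (K t) \<inter> lower_cone le (x (t - 1))) (x t)" by (rule m)
  qed
qed

end
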